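(* Let $\phi:\mathbf{R}^n\to\mathbf{R}$ be a uniformly convex norm of class $\mathcal{C}^2$ on $\mathbf{R}^n\setminus\{0\}$, let $K\subseteq\mathbf{R}^n$ be closed, let $1<\sigma<\infty$ and $0<s<t<\infty$, and set $$K_{\sigma,s,t}=\bigl\{a+\rho\eta:(a,\eta)\in N^\phi(K),\ s\le\rho\le t,\ \sigma\rho\le r^\phi_K(a,\eta)\bigr\}.$$ Then $\delta^\phi_K$ is differentiable at every point of $K_{\sigma,s,t}$ and $\nabla\delta^\phi_K|K_{\sigma,s,t}$ is Lipschitz continuous.
   Context: A norm $\phi$ on $\mathbf{R}^n$ is uniformly convex if there is $\gamma>0$ such that $x\mapsto\phi(x)-\gamma|x|$ is convex ($|\cdot|$ the Euclidean norm). For closed $K\subseteq\mathbf{R}^n$: $\delta^\phi_K(x)=\inf\{\phi(y-x):y\in K\}$; $N^\phi(K)=\{(a,\eta)\in\mathbf{R}^n\times\mathbf{R}^n: a\in K,\ \phi(\eta)=1,\ \delta^\phi_K(a+s\eta)=s\text{ for some }s>0\}$; and $r^\phi_K(a,\eta)=\sup\{s>0:\delta^\phi_K(a+s\eta)=s\}\in(0,\infty]$ for $(a,\eta)\in N^\phi(K)$. *)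

theory Defs
  imports "HOL-Analysis.Analysis"
begin

definition is_norm :: "(real^'n \<Rightarrow> real) \<Rightarrow> bool" where
  "is_norm \<phi> \<longleftrightarrow> (\<forall>x. 0 \<le> \<phi> x) \<and> (\<forall>x. \<phi> x = 0 \<longleftrightarrow> x = 0)
     \<and> (\<forall>c x. \<phi> (c *\<^sub>R x) = \<bar>c\<bar> * \<phi> x) \<and> (\<forall>x y. \<phi> (x + y) \<le> \<phi> x + \<phi> y)"

definition uniformly_convex_norm :: "(real^'n \<Rightarrow> real) \<Rightarrow> bool" where
  "uniformly_convex_norm \<phi> \<longleftrightarrow> is_norm \<phi> \<and>
     (\<exists>\<gamma>>0. convex_on UNIV (\<lambda>x. \<phi> x - \<gamma> * norm x))"

definition C2_on :: "(real^'n \<Rightarrow> real) \<Rightarrow> (real^'n) set \<Rightarrow> bool" where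
  "C2_on f U \<longleftrightarrow> (\<exists>(g :: real^'n \<Rightarrow> real^'n) (H :: real^'n \<Rightarrow> ((real^'n) \<Rightarrow>\<^sub>L (real^'n))).
      (\<forall>x\<in>U. (f has_derivative (\<lambda>h. g x \<bullet> h)) (at x)) \<and>
      (\<forall>x\<in>U. (g has_derivative blinfun_apply (H x)) (at x)) \<and>
      continuous_on U H)"

definition delta :: "(real^'n \<Rightarrow> real) \<Rightarrow> (real^'n) set \<Rightarrow> real^'n \<Rightarrow> real" where
  "delta \<phi> K x = Inf {\<phi> (y - x) | y. y \<in> K}"

definition normal_bundle :: "(real^'n \<Rightarrow> real) \<Rightarrow> (real^'n) set \<Rightarrow> ((real^'n) \<times> (real^'n)) set" where
  "normal_bundle \<phi> K = {(a, \<eta>). a \<in> K \<and> \<phi> \<eta> = 1 \<and>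
      (\<exists>s>0. delta \<phi> K (a + s *\<^sub>R \<eta>) = s)}"

definition reach :: "(real^'n \<Rightarrow> real) \<Rightarrow> (real^'n) set \<Rightarrow> real^'n \<Rightarrow> real^'n \<Rightarrow> ereal" where
  "reach \<phi> K a \<eta> = Sup (ereal ` {s. s > 0 \<and> delta \<phi> K (a + s *\<^sub>R \<eta>) = s})"

definition Kset :: "(real^'n \<Rightarrow> real) \<Rightarrow> (real^'n) set \<Rightarrow> real \<Rightarrow> real \<Rightarrow> real \<Rightarrow> (real^'n) set" where
  "Kset \<phi> K \<sigma> s t = {a + \<rho> *\<^sub>R \<eta> | a \<eta> \<rho>. (a, \<eta>) \<in> normal_bundle \<phi> K \<and>
      s \<le> \<rho> \<and> \<rho> \<le> t \<and> ereal (\<sigma> * \<rho>) \<le> reach \<phi> K a \<eta>}"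

end

theory Submission
  imports Defs
begin

lemma nsym: "is_norm \<phi> \<Longrightarrow> \<phi> (- x) = \<phi> x"
  unfolding is_norm_def by (metis abs_minus_cancel abs_one mult_1 scaleR_minus1_left)

lemma nscale: "is_norm \<phi> \<Longrightarrow> \<phi> (c *\<^sub>R x) = \<bar>c\<bar> * \<phi> x"
  unfolding is_norm_def by blast

lemma ntri: "is_norm \<phi> \<Longrightarrow> \<phi> (x + y) \<le> \<phi> x + \<phi> y"
  unfolding is_norm_def by blast

lemma nnonneg: "is_norm \<phi> \<Longrightarrow> 0 \<le> \<phi> x"
  unfolding is_norm_def by blast

lemma nzero: "is_norm \<phi> \<Longrightarrow> \<phi> x = 0 \<longleftrightarrow> x = 0"
  unfolding is_norm_def by blast

lemma nconvex: assumes "is_norm \<phi>" shows "convex_on UNIV \<phi>"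
proof (rule convex_onI[OF _ convex_UNIV])
  fix t :: real and x y assume t: "0 < t" "t < 1"
  have "\<phi> ((1 - t) *\<^sub>R x + t *\<^sub>R y) \<le> \<phi> ((1 - t) *\<^sub>R x) + \<phi> (t *\<^sub>R y)"
    by (rule ntri[OF assms])
  also have "\<dots> = (1 - t) * \<phi> x + t * \<phi> y" using t by (simp add: nscale[OF assms])
  finally show "\<phi> ((1 - t) *\<^sub>R x + t *\<^sub>R y) \<le> (1 - t) * \<phi> x + t * \<phi> y" .
qed

lemma nequiv:
  fixes \<phi> :: "real^'n \<Rightarrow> real"
  assumes N: "is_norm \<phi>"
  obtains c1 c2 where "0 < c1" "\<And>x. c1 * norm x \<le> \<phi> x" "\<And>x. \<phi> x \<le> c2 * norm x"
proof -
  have cont: "continuous_on (sphere 0 1) \<phi>"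
    using convex_on_continuous[OF open_UNIV nconvex[OF N]] continuous_on_subset by blast
  have ne: "sphere (0::real^'n) 1 \<noteq> {}" by simp
  obtain p where p: "p \<in> sphere 0 1" "\<And>y. y \<in> sphere 0 1 \<Longrightarrow> \<phi> p \<le> \<phi> y"
    using continuous_attains_inf[OF compact_sphere ne cont] by blast
  obtain q where q: "q \<in> sphere 0 1" "\<And>y. y \<in> sphere 0 1 \<Longrightarrow> \<phi> y \<le> \<phi> q"
    using continuous_attains_sup[OF compact_sphere ne cont] by blast
  have pos: "0 < \<phi> p" using p(1) nnonneg[OF N, of p] nzero[OF N, of p] by force
  have rep: "\<phi> x = norm x * \<phi> (inverse (norm x) *\<^sub>R x)" if "x \<noteq> 0" for x
    using that by (simp add: nscale[OF N])
  have sph: "inverse (norm x) *\<^sub>R x \<in> sphere 0 1" if "x \<noteq> 0" for x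
    using that by simp
  show ?thesis
  proof (rule that[of "\<phi> p" "\<phi> q"])
    show "0 < \<phi> p" by (rule pos)
    fix x
    show "\<phi> p * norm x \<le> \<phi> x"
    proof (cases "x = 0")
      case False thus ?thesis using rep[OF False] p(2)[OF sph[OF False]]
        by (metis mult.commute mult_left_mono norm_ge_zero)
    qed (simp add: nnonneg[OF N])
    show "\<phi> x \<le> \<phi> q * norm x"
    proof (cases "x = 0")
      case False thus ?thesis using rep[OF False] q(2)[OF sph[OF False]]
        by (metis mult.commute mult_left_mono norm_ge_zero)
    qed (use nzero[OF N, of 0] in simp)
  qed
qed

lemma delta_le: "is_norm \<phi> \<Longrightarrow> a \<in> K \<Longrightarrow> delta \<phi> K y \<le> \<phi> (a - y)"
  unfolding delta_def
  by (rule cInf_lower) (auto intro: bdd_belowI[where m=0] simp: nnonneg)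

lemma delta_ge: assumes "is_norm \<phi>" "K \<noteq> {}" shows "delta \<phi> K b - \<phi> (y - b) \<le> delta \<phi> K y"
proof -
  have "delta \<phi> K b - \<phi> (y - b) \<le> \<phi> (k - y)" if "k \<in> K" for k
  proof -
    have "delta \<phi> K b \<le> \<phi> (k - b)" by (rule delta_le[OF assms(1) that])
    also have "\<dots> \<le> \<phi> (k - y) + \<phi> (y - b)" using ntri[OF assms(1), of "k - y" "y - b"] by simp
    finally show ?thesis by simp
  qed
  thus ?thesis unfolding delta_def using assms(2) by (intro cInf_greatest) auto
qed

lemma quad_deriv:
  fixes f :: "real^'n \<Rightarrow> real"
  assumes "\<And>y. \<bar>f y - f x - G \<bullet> (y - x)\<bar> \<le> C * (norm (y - x))^2"
  shows "(f has_derivative (\<lambda>h. G \<bullet> h)) (at x)"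
  unfolding has_derivative_at
proof
  show "bounded_linear ((\<bullet>) G)" by (rule bounded_linear_inner_right)
  show "(\<lambda>h. norm (f (x + h) - f x - G \<bullet> h) / norm h) \<midarrow>0\<rightarrow> 0"
  proof (rule Lim_null_comparison)
    show "\<forall>\<^sub>F h in at 0. norm (norm (f (x + h) - f x - G \<bullet> h) / norm h) \<le> C * norm h"
    proof (rule eventually_mono)
      show "\<forall>\<^sub>F h in at (0::real^'n). h \<noteq> 0" by (simp add: eventually_at_filter)
      fix h :: "real^'n" assume "h \<noteq> 0"
      hence h: "norm h > 0" by simp
      have "\<bar>f (x + h) - f x - G \<bullet> h\<bar> \<le> C * (norm h)^2" using assms[of "x + h"] by simp
      thus "norm (norm (f (x + h) - f x - G \<bullet> h) / norm h) \<le> C * norm h"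
        using h by (simp add: divide_le_eq power2_eq_square mult.assoc)
    qed
    show "((\<lambda>h. C * norm h) \<longlongrightarrow> 0) (at 0)"
      by (rule tendsto_eq_intros | simp)+
  qed
qed


lemma taylor_bound:
  fixes \<phi> :: "real^'n \<Rightarrow> real" and g :: "real^'n \<Rightarrow> real^'n"
    and H :: "real^'n \<Rightarrow> ((real^'n) \<Rightarrow>\<^sub>L (real^'n))"
  assumes N: "is_norm \<phi>" and c1: "0 < c1" and c1b: "\<And>x. c1 * norm x \<le> \<phi> x"
    and c2b: "\<And>x. \<phi> x \<le> c2 * norm x"
    and gd: "\<forall>x\<in>-{0}. (\<phi> has_derivative (\<lambda>h. g x \<bullet> h)) (at x)"
    and Hd: "\<forall>x\<in>-{0}. (g has_derivative blinfun_apply (H x)) (at x)"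
    and Hc: "continuous_on (-{0}) H" and m: "0 < m"
  obtains C where "\<And>u v. m \<le> \<phi> u \<Longrightarrow> \<phi> u \<le> M \<Longrightarrow>
      \<phi> v \<le> \<phi> u + g u \<bullet> (v - u) + C * (norm (v - u))^2"
proof -
  obtain e :: "real^'n" where e: "norm e = 1" using vector_choose_size[of 1] by auto
  have c2: "c1 \<le> c2" using c1b[of e] c2b[of e] e by simp
  hence c2p: "0 < c2" using c1 by simp
  define r1 where "r1 = m / c2"
  define r2 where "r2 = M / c1"
  define c where "c = r1 / 2"
  have cpos: "0 < c" using m c2p by (simp add: c_def r1_def)
  define Q where "Q = cball (0::real^'n) (r2 + c) \<inter> - ball 0 c"
  have cQ: "compact Q" unfolding Q_def by (intro compact_Int_closed compact_cball) auto
  have Q0: "Q \<subseteq> - {0}" using cpos by (auto simp: Q_def)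
  have "compact (H ` Q)"
    using Q0 cQ Hc by (intro compact_continuous_image) (auto intro: continuous_on_subset)
  then obtain B where Bp: "B > 0" and B: "\<And>w. w \<in> Q \<Longrightarrow> norm (H w) \<le> B"
    using compact_imp_bounded[of "H ` Q"] unfolding bounded_pos by auto
  have gcont: "continuous_on Q g"
    using Q0 Hd by (intro continuous_at_imp_continuous_on ballI has_derivative_continuous) blast
  have "compact (g ` Q)" using cQ gcont by (intro compact_continuous_image)
  then obtain G0 where G0p: "G0 > 0" and G0: "\<And>w. w \<in> Q \<Longrightarrow> norm (g w) \<le> G0"
    using compact_imp_bounded[of "g ` Q"] unfolding bounded_pos by auto
  define C where "C = max B ((c2 + G0) / c)"
  show ?thesis
  proof (rule that[of C])
    fix u v :: "real^'n" assume mu: "m \<le> \<phi> u" and uM: "\<phi> u \<le> M"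
    have nu1: "r1 \<le> norm u" using mu c2b[of u] c2p by (simp add: r1_def divide_le_eq mult.commute)
    have nu2: "norm u \<le> r2" using uM c1b[of u] c1 by (simp add: r2_def le_divide_eq mult.commute)
    show "\<phi> v \<le> \<phi> u + g u \<bullet> (v - u) + C * (norm (v - u))^2"
    proof (cases "norm (v - u) \<le> c")
      case True
      have ballQ: "cball u c \<subseteq> Q"
      proof
        fix w assume "w \<in> cball u c"
        hence d: "norm (w - u) \<le> c" by (simp add: dist_norm norm_minus_commute)
        have "norm u \<le> norm w + norm (w - u)" using norm_triangle_sub[of u w] by (simp add: norm_minus_commute)
        moreover have "norm w \<le> norm u + norm (w - u)" using norm_triangle_sub[of w u] by simp
        ultimately show "w \<in> Q" using d nu1 nu2 by (auto simp: Q_def c_def)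
      qed
      have glip: "norm (g w - g u) \<le> B * norm (w - u)" if "w \<in> cball u c" for w
      proof (rule differentiable_bound[of "cball u c" g "\<lambda>x. blinfun_apply (H x)"])
        show "convex (cball u c)" by simp
        show "(g has_derivative blinfun_apply (H x)) (at x within cball u c)" if "x \<in> cball u c" for x
        proof -
          have "x \<in> Q" using that ballQ by (rule subsetD[rotated])
          hence "x \<in> - {0}" using Q0 by (rule subsetD[rotated])
          hence "(g has_derivative blinfun_apply (H x)) (at x)" using Hd by blast
          thus ?thesis by (rule has_derivative_at_withinI)
        qed
        show "onorm (blinfun_apply (H x)) \<le> B" if "x \<in> cball u c" for x
          using that ballQ B by (auto simp: norm_blinfun.rep_eq[symmetric])
        show "w \<in> cball u c" by (rule that)
        show "u \<in> cball u c" using cpos by simp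
      qed
      have vin: "v \<in> cball u c" using True by (simp add: dist_norm norm_minus_commute)
      have seg: "closed_segment u v \<subseteq> cball u c"
        using vin cpos by (intro closed_segment_subset) auto
      define F where "F w = \<phi> w - g u \<bullet> w" for w
      have "norm (F v - F u) \<le> (B * norm (v - u)) * norm (v - u)"
      proof (rule differentiable_bound[of "closed_segment u v" F "\<lambda>w h. (g w - g u) \<bullet> h"])
        show "convex (closed_segment u v)" by simp
        show "(F has_derivative (\<lambda>h. (g w - g u) \<bullet> h)) (at w within closed_segment u v)"
          if "w \<in> closed_segment u v" for w
        proof -
          have w0: "w \<in> - {0}" using that seg ballQ Q0 by blast
          have "(F has_derivative (\<lambda>h. g w \<bullet> h - g u \<bullet> h)) (at w)"
            unfolding F_def using gd w0
            by (intro has_derivative_diff bounded_linear.has_derivative[OF bounded_linear_inner_right]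
                has_derivative_ident) auto
          hence "(F has_derivative (\<lambda>h. (g w - g u) \<bullet> h)) (at w)" by (simp add: inner_diff_left)
          thus ?thesis by (rule has_derivative_at_withinI)
        qed
        show "onorm (\<lambda>h. (g w - g u) \<bullet> h) \<le> B * norm (v - u)" if "w \<in> closed_segment u v" for w
        proof (rule onorm_le)
          fix h
          have "norm ((g w - g u) \<bullet> h) \<le> norm (g w - g u) * norm h"
            by (simp add: Cauchy_Schwarz_ineq2)
          also have "norm (g w - g u) \<le> B * norm (v - u)"
          proof -
            have "norm (g w - g u) \<le> B * norm (w - u)" using glip that seg by blast
            also have "norm (w - u) \<le> norm (v - u)"
              using dist_in_closed_segment[OF that] by (simp add: dist_norm norm_minus_commute)
            hence "B * norm (w - u) \<le> B * norm (v - u)" using Bp by simp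
            finally show ?thesis .
          qed
          hence "norm (g w - g u) * norm h \<le> B * norm (v - u) * norm h" by (simp add: mult_right_mono)
          finally show "norm ((g w - g u) \<bullet> h) \<le> B * norm (v - u) * norm h" .
        qed
      qed auto
      hence "\<phi> v - \<phi> u - g u \<bullet> (v - u) \<le> B * (norm (v - u))^2"
        by (simp add: F_def inner_diff_right power2_eq_square algebra_simps)
      moreover have "B * (norm (v - u))^2 \<le> C * (norm (v - u))^2"
        by (intro mult_right_mono) (auto simp: C_def)
      ultimately show ?thesis by simp
    next
      case False
      have uQ: "u \<in> Q" using nu1 nu2 cpos by (auto simp: Q_def c_def)
      have "\<phi> v \<le> \<phi> u + \<phi> (v - u)" using ntri[OF N, of u "v - u"] by simp
      also have "\<phi> (v - u) \<le> c2 * norm (v - u)" by (rule c2b)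
      finally have 1: "\<phi> v \<le> \<phi> u + c2 * norm (v - u)" by simp
      have "- (g u \<bullet> (v - u)) \<le> norm (g u) * norm (v - u)"
        using norm_cauchy_schwarz[of "g u" "- (v - u)"] by (simp only: inner_minus_right norm_minus_cancel)
      also have "\<dots> \<le> G0 * norm (v - u)" using G0[OF uQ] by (simp add: mult_right_mono)
      finally have 2: "- (g u \<bullet> (v - u)) \<le> G0 * norm (v - u)" .
      have "(c2 + G0) * norm (v - u) = ((c2 + G0) / c) * (c * norm (v - u))" using cpos by simp
      also have "\<dots> \<le> ((c2 + G0) / c) * (norm (v - u) * norm (v - u))"
        using False cpos c2p G0p by (intro mult_left_mono mult_right_mono) auto
      also have "\<dots> \<le> C * (norm (v - u))^2"
        unfolding power2_eq_square by (intro mult_right_mono) (auto simp: C_def)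
      finally show ?thesis using 1 2 by (simp add: algebra_simps)
    qed
  qed
qed


lemma grad_eq:
  fixes g1 g2 :: "real^'n"
  assumes H: "\<And>h. - (g2 \<bullet> h) - C * (norm h)^2 \<le> g1 \<bullet> h + C * (norm h)^2" and C: "C > 0"
  shows "g1 = - g2"
proof -
  define w where "w = g1 + g2"
  define h where "h = (- 1 / (4 * C)) *\<^sub>R w"
  have "0 \<le> w \<bullet> h + 2 * C * (h \<bullet> h)"
    using H[of h] by (simp add: w_def inner_add_left power2_norm_eq_inner)
  also have "w \<bullet> h + 2 * C * (h \<bullet> h) = - (w \<bullet> w) / (8 * C)"
    using C by (simp add: h_def field_simps power2_eq_square)
  finally have "w \<bullet> w \<le> 0" using C by (simp add: divide_le_0_iff zero_le_divide_iff)
  hence "w = 0" by (metis inner_eq_zero_iff inner_ge_zero order_antisym)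
  thus ?thesis by (simp add: w_def add_eq_0_iff)
qed

lemma quad_lip:
  fixes f :: "real^'n \<Rightarrow> real" and G :: "real^'n \<Rightarrow> real^'n"
  assumes Q: "\<And>x y. x \<in> S \<Longrightarrow> \<bar>f y - f x - G x \<bullet> (y - x)\<bar> \<le> C * (norm (y - x))^2"
    and C: "0 \<le> C"
  shows "(6 * C)-lipschitz_on S G"
proof (rule lipschitz_onI)
  show "0 \<le> 6 * C" using C by simp
  fix x x' assume x: "x \<in> S" and x': "x' \<in> S"
  define d where "d = norm (x' - x)"
  define w where "w = G x - G x'"
  show "dist (G x) (G x') \<le> 6 * C * dist x x'"
  proof (cases "w = 0")
    case True thus ?thesis using C by (simp add: w_def)
  next
    case False
    hence xx: "x \<noteq> x'" by (auto simp: w_def)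
    hence dp: "d > 0" by (simp add: d_def)
    have wp: "norm w > 0" using False by simp
    define h where "h = (- d / norm w) *\<^sub>R w"
    define z where "z = x' + h"
    have nh: "norm h = d" using wp dp by (simp add: h_def)
    have wh: "w \<bullet> h = - d * norm w"
      using wp by (simp add: h_def power2_norm_eq_inner[symmetric] power2_eq_square)
    have zx: "norm (z - x) \<le> 2 * d"
    proof -
      have "z - x = h + (x' - x)" by (simp add: z_def)
      hence "norm (z - x) \<le> norm h + norm (x' - x)" by (metis norm_triangle_ineq)
      thus ?thesis using nh by (simp add: d_def)
    qed
    have zx2: "(norm (z - x))^2 \<le> 4 * d^2"
    proof -
      have "(norm (z - x))^2 \<le> (2 * d)^2" using zx by (intro power_mono) auto
      thus ?thesis by (simp add: power2_eq_square)
    qed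
    have zx': "(norm (z - x'))^2 = d^2" using nh by (simp add: z_def)
    have 1: "f z - f x - G x \<bullet> (z - x) \<le> C * (norm (z - x))^2" using Q[OF x, of z] by simp
    have 2: "- (C * (norm (z - x'))^2) \<le> f z - f x' - G x' \<bullet> (z - x')" using Q[OF x', of z] by simp
    have 3: "- (C * (norm (x' - x))^2) \<le> f x' - f x - G x \<bullet> (x' - x)" using Q[OF x, of x'] by simp
    have e1: "G x \<bullet> (z - x) = G x \<bullet> (z - x') + G x \<bullet> (x' - x)" by (simp add: inner_diff_right)
    have e2: "w \<bullet> h = G x \<bullet> (z - x') - G x' \<bullet> (z - x')" by (simp add: w_def z_def inner_diff_left)
    have "- (w \<bullet> h) \<le> C * (norm (z - x))^2 + C * (norm (z - x'))^2 + C * (norm (x' - x))^2"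
      using 1 2 3 e1 e2 by linarith
    also have "\<dots> \<le> C * (4 * d^2) + C * d^2 + C * d^2"
    proof -
      have "C * (norm (z - x))^2 \<le> C * (4 * d^2)" using zx2 C by (rule mult_left_mono)
      thus ?thesis using zx' by (simp add: d_def)
    qed
    finally have "d * norm w \<le> d * (6 * C * d)" using wh by (simp add: algebra_simps power2_eq_square)
    hence "norm w \<le> 6 * C * d" using dp by simp
    thus ?thesis by (simp add: w_def dist_norm d_def norm_minus_commute)
  qed
qed


theorem theorem1p4:
  fixes \<phi> :: "real^'n \<Rightarrow> real" and K :: "(real^'n) set" and \<sigma> s t :: real
  assumes "uniformly_convex_norm \<phi>"
    and "C2_on \<phi> (- {0})"
    and "closed K"
    and "1 < \<sigma>" and "0 < s" and "s < t"
  shows "(\<forall>x\<in>Kset \<phi> K \<sigma> s t. delta \<phi> K differentiable (at x)) \<and>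
         (\<exists>(G :: real^'n \<Rightarrow> real^'n) L.
            (\<forall>x\<in>Kset \<phi> K \<sigma> s t. (delta \<phi> K has_derivative (\<lambda>h. G x \<bullet> h)) (at x)) \<and>
            L-lipschitz_on (Kset \<phi> K \<sigma> s t) G)"
proof -
  have N: "is_norm \<phi>" using assms(1) by (simp add: uniformly_convex_norm_def)
  obtain g :: "real^'n \<Rightarrow> real^'n" and H :: "real^'n \<Rightarrow> ((real^'n) \<Rightarrow>\<^sub>L (real^'n))"
    where gd: "\<forall>x\<in>-{0}. (\<phi> has_derivative (\<lambda>h. g x \<bullet> h)) (at x)"
      and Hd: "\<forall>x\<in>-{0}. (g has_derivative blinfun_apply (H x)) (at x)"
      and Hc: "continuous_on (-{0}) H"
    using assms(2) unfolding C2_on_def by blast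
  obtain c1 c2 where c1: "0 < c1" and c1b: "\<And>x. c1 * norm x \<le> \<phi> x" and c2b: "\<And>x. \<phi> x \<le> c2 * norm x"
    using nequiv[OF N] by blast
  define \<sigma>' where "\<sigma>' = (1 + \<sigma>) / 2"
  have s1: "1 < \<sigma>'" "\<sigma>' < \<sigma>" using assms(4) by (auto simp: \<sigma>'_def)
  obtain C1 where C1: "\<And>u v. s \<le> \<phi> u \<Longrightarrow> \<phi> u \<le> t \<Longrightarrow>
      \<phi> v \<le> \<phi> u + g u \<bullet> (v - u) + C1 * (norm (v - u))^2"
    using taylor_bound[OF N c1 c1b c2b gd Hd Hc assms(5), of t] by blast
  have mpos: "0 < (\<sigma>' - 1) * s" using s1 assms(5) by simp
  obtain C2 where C2: "\<And>u v. (\<sigma>' - 1) * s \<le> \<phi> u \<Longrightarrow> \<phi> u \<le> (\<sigma>' - 1) * t \<Longrightarrow>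
      \<phi> v \<le> \<phi> u + g u \<bullet> (v - u) + C2 * (norm (v - u))^2"
    using taylor_bound[OF N c1 c1b c2b gd Hd Hc mpos, of "(\<sigma>' - 1) * t"] by blast
  define C where "C = max 1 (max C1 C2)"
  have Cp: "0 < C" by (simp add: C_def)
  define P where "P x a \<eta> \<rho> \<longleftrightarrow> (a, \<eta>) \<in> normal_bundle \<phi> K \<and> s \<le> \<rho> \<and> \<rho> \<le> t \<and>
      ereal (\<sigma> * \<rho>) \<le> reach \<phi> K a \<eta> \<and> x = a + \<rho> *\<^sub>R \<eta>" for x a \<eta> \<rho>
  have KP: "x \<in> Kset \<phi> K \<sigma> s t \<longleftrightarrow> (\<exists>a \<eta> \<rho>. P x a \<eta> \<rho>)" for x
    unfolding Kset_def P_def mem_Collect_eq by (simp only: conj_commute conj_left_commute eq_commute)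
  define G where "G x = g (x - (SOME a. \<exists>\<eta> \<rho>. P x a \<eta> \<rho>))" for x
  have key: "\<bar>delta \<phi> K y - delta \<phi> K x - G x \<bullet> (y - x)\<bar> \<le> C * (norm (y - x))^2"
    if xK: "x \<in> Kset \<phi> K \<sigma> s t" for x y
  proof -
    define a where "a = (SOME a. \<exists>\<eta> \<rho>. P x a \<eta> \<rho>)"
    have "\<exists>\<eta> \<rho>. P x a \<eta> \<rho>" unfolding a_def by (rule someI_ex) (use xK KP in blast)
    then obtain \<eta> \<rho> where P: "P x a \<eta> \<rho>" by blast
    have Gx: "G x = g (x - a)" by (simp add: G_def a_def)
    have aK: "a \<in> K" and e1: "\<phi> \<eta> = 1" and sr: "s \<le> \<rho>" and rt: "\<rho> \<le> t"
      and reach: "ereal (\<sigma> * \<rho>) \<le> reach \<phi> K a \<eta>" and xdef: "x = a + \<rho> *\<^sub>R \<eta>"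
      using P unfolding P_def normal_bundle_def by auto
    have Kne: "K \<noteq> {}" using aK by auto
    have rp: "0 < \<rho>" using sr assms(5) by simp
    define S where "S = {r. r > 0 \<and> delta \<phi> K (a + r *\<^sub>R \<eta>) = r}"
    have "ereal (\<sigma>' * \<rho>) < Sup (ereal ` S)"
    proof -
      have "\<sigma>' * \<rho> < \<sigma> * \<rho>" using s1 rp by simp
      hence "ereal (\<sigma>' * \<rho>) < ereal (\<sigma> * \<rho>)" by simp
      also have "\<dots> \<le> Sup (ereal ` S)" using reach unfolding reach_def S_def .
      finally show ?thesis .
    qed
    then obtain R where RS: "R \<in> S" and RR: "\<sigma>' * \<rho> < R" by (auto simp: less_Sup_iff)
    have down: "delta \<phi> K (a + r *\<^sub>R \<eta>) = r" if "0 < r" "r \<le> R" for r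
    proof (rule antisym)
      have "delta \<phi> K (a + r *\<^sub>R \<eta>) \<le> \<phi> (a - (a + r *\<^sub>R \<eta>))" by (rule delta_le[OF N aK])
      also have "\<dots> = r" using that e1 by (simp add: nsym[OF N] nscale[OF N])
      finally show "delta \<phi> K (a + r *\<^sub>R \<eta>) \<le> r" .
      have "delta \<phi> K (a + R *\<^sub>R \<eta>) - \<phi> ((a + r *\<^sub>R \<eta>) - (a + R *\<^sub>R \<eta>)) \<le> delta \<phi> K (a + r *\<^sub>R \<eta>)"
        by (rule delta_ge[OF N Kne])
      moreover have "\<phi> ((a + r *\<^sub>R \<eta>) - (a + R *\<^sub>R \<eta>)) = R - r"
      proof -
        have "(a + r *\<^sub>R \<eta>) - (a + R *\<^sub>R \<eta>) = (r - R) *\<^sub>R \<eta>" by (simp add: algebra_simps)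
        thus ?thesis using that e1 by (simp add: nscale[OF N])
      qed
      moreover have "delta \<phi> K (a + R *\<^sub>R \<eta>) = R" using RS by (simp add: S_def)
      ultimately show "r \<le> delta \<phi> K (a + r *\<^sub>R \<eta>)" by simp
    qed
    define R' where "R' = \<sigma>' * \<rho>"
    define b where "b = a + R' *\<^sub>R \<eta>"
    have R'p: "0 < R'" "\<rho> < R'" using rp s1 by (auto simp: R'_def)
    have db: "delta \<phi> K b = R'" unfolding b_def using R'p RR by (intro down) (auto simp: R'_def)
    have rR: "\<rho> < R" using R'p RR unfolding R'_def by linarith
    have dx: "delta \<phi> K x = \<rho>" unfolding xdef using rR rp by (intro down) auto
    have xa: "x - a = \<rho> *\<^sub>R \<eta>" by (simp add: xdef)
    have pxa: "\<phi> (x - a) = \<rho>" using xa rp e1 by (simp add: nscale[OF N])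
    have xb: "x - b = (\<rho> - R') *\<^sub>R \<eta>" by (simp add: xdef b_def algebra_simps)
    have pxb: "\<phi> (x - b) = R' - \<rho>" using xb R'p e1 by (simp add: nscale[OF N])
    have pxb1: "(\<sigma>' - 1) * s \<le> \<phi> (x - b)" "\<phi> (x - b) \<le> (\<sigma>' - 1) * t"
    proof -
      have e: "\<phi> (x - b) = (\<sigma>' - 1) * \<rho>" using pxb by (simp add: R'_def algebra_simps)
      have p: "0 \<le> \<sigma>' - 1" using s1 by simp
      show "(\<sigma>' - 1) * s \<le> \<phi> (x - b)" unfolding e using sr p by (rule mult_left_mono)
      show "\<phi> (x - b) \<le> (\<sigma>' - 1) * t" unfolding e using rt p by (rule mult_left_mono)
    qed
    define g1 where "g1 = g (x - a)"
    define g2 where "g2 = g (x - b)"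
    have sq: "0 \<le> (norm (y' - x))^2" for y' :: "real^'n" by simp
    have up: "delta \<phi> K y' \<le> \<rho> + g1 \<bullet> (y' - x) + C * (norm (y' - x))^2" for y'
    proof -
      have "delta \<phi> K y' \<le> \<phi> (a - y')" by (rule delta_le[OF N aK])
      also have "\<dots> = \<phi> (y' - a)" using nsym[OF N, of "y' - a"] by simp
      also have "\<dots> \<le> \<phi> (x - a) + g (x - a) \<bullet> ((y' - a) - (x - a)) + C1 * (norm ((y' - a) - (x - a)))^2"
        using pxa sr rt by (intro C1) auto
      also have "\<dots> \<le> \<rho> + g1 \<bullet> (y' - x) + C * (norm (y' - x))^2"
        using pxa by (simp add: g1_def C_def mult_right_mono)
      finally show ?thesis .
    qed
    have lo: "\<rho> - g2 \<bullet> (y' - x) - C * (norm (y' - x))^2 \<le> delta \<phi> K y'" for y'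
    proof -
      have "\<phi> (y' - b) \<le> \<phi> (x - b) + g (x - b) \<bullet> ((y' - b) - (x - b)) + C2 * (norm ((y' - b) - (x - b)))^2"
        using pxb1 by (intro C2) auto
      also have "\<dots> \<le> (R' - \<rho>) + g2 \<bullet> (y' - x) + C * (norm (y' - x))^2"
        using pxb by (simp add: g2_def C_def mult_right_mono)
      finally have 1: "\<phi> (y' - b) \<le> (R' - \<rho>) + g2 \<bullet> (y' - x) + C * (norm (y' - x))^2" .
      have "delta \<phi> K b - \<phi> (y' - b) \<le> delta \<phi> K y'" by (rule delta_ge[OF N Kne])
      thus ?thesis using 1 db by simp
    qed
    have "g1 = - g2"
    proof (rule grad_eq[OF _ Cp])
      fix h :: "real^'n"
      have "\<rho> - g2 \<bullet> ((x + h) - x) - C * (norm ((x + h) - x))^2 \<le> \<rho> + g1 \<bullet> ((x + h) - x) + C * (norm ((x + h) - x))^2"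
        using lo[of "x + h"] up[of "x + h"] by linarith
      thus "- (g2 \<bullet> h) - C * (norm h)^2 \<le> g1 \<bullet> h + C * (norm h)^2" by simp
    qed
    hence "g2 \<bullet> (y - x) = - (g1 \<bullet> (y - x))" by simp
    thus ?thesis using up[of y] lo[of y] dx Gx by (simp add: g1_def abs_le_iff)
  qed
  show ?thesis
  proof (intro conjI ballI exI)
    show "(delta \<phi> K has_derivative (\<lambda>h. G x \<bullet> h)) (at x)" if "x \<in> Kset \<phi> K \<sigma> s t" for x
      by (rule quad_deriv) (rule key[OF that])
    thus "delta \<phi> K differentiable (at x)" if "x \<in> Kset \<phi> K \<sigma> s t" for x
      using that unfolding differentiable_def by blast
    show "(6 * C)-lipschitz_on (Kset \<phi> K \<sigma> s t) G"
      by (rule quad_lip) (use key Cp in auto)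
  qed
qed

end
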